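(* Let $\alpha\ge1/2$, $\lambda>0$, $0<a<b<1$, and let $X$ be an almost surely positive random variable. There exists a constant $A>0$ depending on the law of $X$ and on $\alpha,\lambda,a,b$ such that for all $(\tau,u)\in(a,b)\times(0,\infty)$, $$\big|\log g(\tau,u)\big|\le A+\frac{2\lambda u}{1-b}+|\alpha-1|\,|\log u|.$$
   Context: With $\mathbb{P}_X$ the law of $X$ and $I_\nu$ the modified Bessel function of the first kind, $g(\tau,u)=\frac{\lambda}{1-\tau}\big(\frac{u}{\tau}\big)^{\frac{\alpha-1}{2}}e^{-\frac{\lambda u}{1-\tau}}\int_0^\infty x^{-\frac{\alpha-1}{2}}e^{-\frac{\lambda\tau x}{1-\tau}}I_{\alpha-1}\big(\frac{2\lambda\sqrt{ux\tau}}{1-\tau}\big)\mathbb{P}_X(dx)$ (the density of the gamma smart path $X_\tau$). *)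

theory Defs
  imports "HOL-Probability.Probability"
begin

definition besselI :: "real \<Rightarrow> real \<Rightarrow> real" where
  "besselI nu z = (\<Sum>k. (z / 2) powr (2 * real k + nu) / (fact k * Gamma (real k + nu + 1)))"

text \<open>Density of the gamma smart path X_tau, where PX is the law of X.\<close>
definition gamma_path_density ::
  "real measure \<Rightarrow> real \<Rightarrow> real \<Rightarrow> real \<Rightarrow> real \<Rightarrow> real" where
  "gamma_path_density PX \<alpha> lam \<tau> u =
     lam / (1 - \<tau>) * (u / \<tau>) powr ((\<alpha> - 1) / 2) * exp (- lam * u / (1 - \<tau>)) *
     (LINT x|PX. x powr (- (\<alpha> - 1) / 2) * exp (- lam * \<tau> * x / (1 - \<tau>)) *
        besselI (\<alpha> - 1) (2 * lam * sqrt (u * x * \<tau>) / (1 - \<tau>)))"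

end

theory Submission imports Defs begin

lemma poch_bound:
  fixes \<nu> :: real assumes "\<nu> \<ge> -1/2"
  shows "fact (2*k) \<le> fact k * pochhammer (\<nu>+1) k * 4^k"
proof (induction k)
  case 0 then show ?case by simp
next
  case (Suc k)
  have p: "0 \<le> pochhammer (\<nu>+1) k" using assms by (intro pochhammer_nonneg) auto
  have "fact (2 * Suc k) = (fact (2*k) :: real) * ((2*k+1) * (2*k+2))"
    by (simp add: algebra_simps fact_Suc)
  also have "\<dots> \<le> (fact k * pochhammer (\<nu>+1) k * 4^k) * ((2*k+1) * (2*k+2))"
    using Suc by (intro mult_right_mono) auto
  also have "\<dots> \<le> (fact k * pochhammer (\<nu>+1) k * 4^k) * (4 * ((k+1) * (\<nu>+1+k)))"
  proof -
    have "0 \<le> (real k+1)*(2*\<nu>+1)" using assms by (intro mult_nonneg_nonneg) auto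
    then have "real ((2*k+1) * (2*k+2)) \<le> 4 * ((real k+1) * (\<nu>+1+real k))"
      by (simp add: algebra_simps)
    then show ?thesis using p by (intro mult_left_mono) (auto simp: add.commute)
  qed
  also have "\<dots> = fact (Suc k) * pochhammer (\<nu>+1) (Suc k) * 4^(Suc k)"
    by (simp add: pochhammer_Suc fact_Suc algebra_simps)
  finally show ?case .
qed

lemma Gamma_shift:
  fixes \<nu> :: real assumes "\<nu> \<ge> -1/2"
  shows "Gamma (real k + \<nu> + 1) = pochhammer (\<nu>+1) k * Gamma (\<nu>+1)"
proof -
  have "\<nu> + 1 \<notin> \<int>\<^sub>\<le>\<^sub>0" using assms by (auto elim!: nonpos_Ints_cases)
  moreover have "Gamma (\<nu>+1) > 0" using assms by (intro Gamma_real_pos) auto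
  ultimately show ?thesis using pochhammer_Gamma[of "\<nu>+1" k] by (simp add: algebra_simps)
qed

lemma even_sums: "(\<lambda>k. (z::real)^(2*k) / fact (2*k)) sums cosh z"
proof -
  have "(\<lambda>k. (\<lambda>n. if even n then z ^ n /\<^sub>R fact n else 0) (2*k)) sums cosh z"
    by (subst sums_mono_reindex) (auto intro: strict_monoI cosh_converges)
  then show ?thesis by (simp add: divide_inverse_commute)
qed

lemma bessel_term_bound:
  fixes \<nu> z :: real assumes "\<nu> \<ge> -1/2" "z > 0"
  shows "(z / 2) powr (2 * real k + \<nu>) / (fact k * Gamma (real k + \<nu> + 1))
     \<le> (z/2) powr \<nu> / Gamma (\<nu>+1) * (z^(2*k) / fact (2*k))"
proof -
  have G: "Gamma (\<nu>+1) > 0" using assms by (intro Gamma_real_pos) auto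
  have p: "pochhammer (\<nu>+1) k > 0" using assms by (intro pochhammer_pos) auto
  have e: "(z / 2) powr (2 * real k + \<nu>) = (z/2) powr \<nu> * (z^(2*k) / 4^k)"
  proof -
    have "(z / 2) powr (2 * real k + \<nu>) = (z/2) powr (real (2*k)) * (z/2) powr \<nu>"
      by (simp add: powr_add)
    also have "(z/2) powr (real (2*k)) = (z/2)^(2*k)" by (rule powr_realpow) (use assms in simp)
    also have "(z/2)^(2*k) = z^(2*k) / 4^k" by (simp add: power_divide power_mult)
    finally show ?thesis by simp
  qed
  have "z^(2*k) / (fact k * pochhammer (\<nu>+1) k * 4^k) \<le> z^(2*k) / fact (2*k)"
    using poch_bound[OF assms(1), of k] p assms by (intro divide_left_mono) auto
  then have "(z/2) powr \<nu> / Gamma (\<nu>+1) * (z^(2*k) / (fact k * pochhammer (\<nu>+1) k * 4^k))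
     \<le> (z/2) powr \<nu> / Gamma (\<nu>+1) * (z^(2*k) / fact (2*k))"
    using G by (intro mult_left_mono) auto
  moreover have "(z / 2) powr (2 * real k + \<nu>) / (fact k * Gamma (real k + \<nu> + 1)) =
     (z/2) powr \<nu> / Gamma (\<nu>+1) * (z^(2*k) / (fact k * pochhammer (\<nu>+1) k * 4^k))"
    unfolding e Gamma_shift[OF assms(1)] by (simp add: field_simps)
  ultimately show ?thesis by simp
qed

lemma bessel_bounds:
  fixes \<nu> z :: real assumes "\<nu> \<ge> -1/2" "z > 0"
  shows "(z/2) powr \<nu> / Gamma (\<nu>+1) \<le> besselI \<nu> z"
    and "besselI \<nu> z \<le> (z/2) powr \<nu> / Gamma (\<nu>+1) * exp z"
proof -
  define t where "t k = (z / 2) powr (2 * real k + \<nu>) / (fact k * Gamma (real k + \<nu> + 1))" for k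
  define C where "C = (z/2) powr \<nu> / Gamma (\<nu>+1)"
  have G: "Gamma (\<nu>+1) > 0" using assms by (intro Gamma_real_pos) auto
  have Gk: "Gamma (real k + \<nu> + 1) > 0" for k using assms by (intro Gamma_real_pos) auto
  have t0: "0 \<le> t k" for k using Gk unfolding t_def by (intro divide_nonneg_pos) auto
  have tb: "t k \<le> C * (z^(2*k) / fact (2*k))" for k
    unfolding t_def C_def using bessel_term_bound[OF assms] .
  have cs: "(\<lambda>k. C * (z^(2*k) / fact (2*k))) sums (C * cosh z)"
    by (intro sums_mult even_sums)
  have st: "summable t"
    by (rule summable_comparison_test[OF _ sums_summable[OF cs]]) (use t0 tb in auto)
  have bI: "besselI \<nu> z = suminf t" unfolding besselI_def t_def ..
  have "sum t {0} \<le> suminf t" by (rule sum_le_suminf[OF st]) (use t0 in auto)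
  then show "(z/2) powr \<nu> / Gamma (\<nu>+1) \<le> besselI \<nu> z"
    unfolding bI by (simp add: t_def)
  have "suminf t \<le> C * cosh z"
    using suminf_le[OF tb st sums_summable[OF cs]] sums_unique[OF cs] by simp
  also have "\<dots> \<le> C * exp z"
    using G assms by (intro mult_left_mono) (auto simp: cosh_def C_def)
  finally show "besselI \<nu> z \<le> (z/2) powr \<nu> / Gamma (\<nu>+1) * exp z"
    unfolding bI C_def .
qed

lemma besselI_meas[measurable]: "besselI \<nu> \<in> borel_measurable borel"
  unfolding besselI_def by measurable

lemma two_sqrt_le: "0 \<le> p \<Longrightarrow> 0 \<le> q \<Longrightarrow> 2 * sqrt (p*q) \<le> p + q"
proof -
  assume p: "0 \<le> p" and q: "0 \<le> q"
  have "0 \<le> (sqrt p - sqrt q)^2" by simp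
  then show ?thesis using p q by (simp add: power2_eq_square algebra_simps real_sqrt_mult)
qed

lemma pointwise:
  fixes \<alpha> lam \<tau> u x :: real
  assumes "\<alpha> \<ge> 1/2" "lam > 0" "0 < \<tau>" "\<tau> < 1" "u > 0" "x > 0"
  defines "c \<equiv> lam / (1 - \<tau>)"
  defines "K \<equiv> c powr (\<alpha>-1) * (u*\<tau>) powr ((\<alpha>-1)/2) / Gamma \<alpha>"
  shows "K * exp (- c*\<tau>*x) \<le> x powr (- (\<alpha> - 1) / 2) * exp (- lam * \<tau> * x / (1 - \<tau>)) *
        besselI (\<alpha> - 1) (2 * lam * sqrt (u * x * \<tau>) / (1 - \<tau>))"
    and "x powr (- (\<alpha> - 1) / 2) * exp (- lam * \<tau> * x / (1 - \<tau>)) *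
        besselI (\<alpha> - 1) (2 * lam * sqrt (u * x * \<tau>) / (1 - \<tau>)) \<le> K * exp (c * u)"
proof -
  define \<nu> where "\<nu> = \<alpha> - 1"
  define z where "z = 2 * lam * sqrt (u * x * \<tau>) / (1 - \<tau>)"
  have c0: "c > 0" using assms unfolding c_def by auto
  have z0: "z > 0" using assms unfolding z_def by auto
  have \<nu>: "\<nu> \<ge> -1/2" using assms unfolding \<nu>_def by auto
  have G: "Gamma \<alpha> > 0" using assms by (intro Gamma_real_pos) auto
  have z2: "z/2 = c * sqrt (u*x*\<tau>)" unfolding z_def c_def using assms by (simp add: field_simps)
  have "(z/2) powr \<nu> = c powr \<nu> * (sqrt (u*x*\<tau>)) powr \<nu>"
    unfolding z2 using c0 by (simp add: powr_mult)
  also have "sqrt (u*x*\<tau>) = (u*x*\<tau>) powr (1/2)" using assms by (simp add: powr_half_sqrt)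
  also have "((u*x*\<tau>) powr (1/2)) powr \<nu> = (u*\<tau>) powr (\<nu>/2) * x powr (\<nu>/2)"
    using assms by (simp add: powr_powr powr_mult[symmetric] mult_ac)
  finally have zp: "(z/2) powr \<nu> = c powr \<nu> * (u*\<tau>) powr (\<nu>/2) * x powr (\<nu>/2)" by simp
  have xx: "x powr (- \<nu> / 2) * x powr (\<nu>/2) = 1"
    using assms by (simp add: powr_add[symmetric])
  have KK: "x powr (- \<nu> / 2) * ((z/2) powr \<nu> / Gamma (\<nu>+1)) = K"
    unfolding zp K_def \<nu>_def[symmetric]
    using xx by (simp add: \<nu>_def field_simps)
  have E: "exp (- lam * \<tau> * x / (1 - \<tau>)) = exp (- c*\<tau>*x)" unfolding c_def by simp
  have xp0: "x powr (- \<nu> / 2) > 0" using assms by simp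
  note bl = bessel_bounds(1)[OF \<nu> z0] and bu = bessel_bounds(2)[OF \<nu> z0]
  have "K * exp (- c*\<tau>*x) = x powr (- \<nu> / 2) * exp (- c*\<tau>*x) * ((z/2) powr \<nu> / Gamma (\<nu>+1))"
    unfolding KK[symmetric] by simp
  also have "\<dots> \<le> x powr (- \<nu> / 2) * exp (- c*\<tau>*x) * besselI \<nu> z"
    using bl xp0 by (intro mult_left_mono) auto
  finally show "K * exp (- c*\<tau>*x) \<le> x powr (- (\<alpha> - 1) / 2) * exp (- lam * \<tau> * x / (1 - \<tau>)) *
        besselI (\<alpha> - 1) (2 * lam * sqrt (u * x * \<tau>) / (1 - \<tau>))"
    unfolding E z_def \<nu>_def .
  have "x powr (- \<nu> / 2) * exp (- c*\<tau>*x) * besselI \<nu> z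
      \<le> x powr (- \<nu> / 2) * exp (- c*\<tau>*x) * ((z/2) powr \<nu> / Gamma (\<nu>+1) * exp z)"
    using bu xp0 by (intro mult_left_mono) auto
  also have "\<dots> = K * exp (- c*\<tau>*x + z)"
  proof -
    have "exp (- c*\<tau>*x + z) = exp(-c*\<tau>*x) * exp z" by (rule exp_add)
    then show ?thesis unfolding KK[symmetric] by (simp only: mult_ac)
  qed
  also have "\<dots> \<le> K * exp (c * u)"
  proof -
    have K0: "K \<ge> 0" unfolding K_def using G by simp
    have "2 * sqrt (u * (x*\<tau>)) \<le> u + x*\<tau>" using assms by (intro two_sqrt_le) auto
    then have "z \<le> c * (u + x*\<tau>)" unfolding z_def c_def using assms
      by (simp add: mult_ac divide_simps)
    then have "- c*\<tau>*x + z \<le> c*u" by (simp add: algebra_simps)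
    then show ?thesis using K0 by (intro mult_left_mono) auto
  qed
  finally show "x powr (- (\<alpha> - 1) / 2) * exp (- lam * \<tau> * x / (1 - \<tau>)) *
        besselI (\<alpha> - 1) (2 * lam * sqrt (u * x * \<tau>) / (1 - \<tau>)) \<le> K * exp (c * u)"
    unfolding E z_def \<nu>_def .
qed

theorem lemma7p4:
  fixes M :: "'a measure" and X :: "'a \<Rightarrow> real"
    and \<alpha> lam a b :: real
  assumes "prob_space M"
    and "X \<in> borel_measurable M"
    and "AE \<omega> in M. X \<omega> > 0"
    and "\<alpha> \<ge> 1 / 2" and "lam > 0"
    and "0 < a" and "a < b" and "b < 1"
  shows "\<exists>A > 0. \<forall>\<tau> \<in> {a<..<b}. \<forall>u > 0.
           \<bar>ln (gamma_path_density (distr M borel X) \<alpha> lam \<tau> u)\<bar>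
             \<le> A + 2 * lam * u / (1 - b) + \<bar>\<alpha> - 1\<bar> * \<bar>ln u\<bar>"
proof -
  define PX where "PX = distr M borel X"
  interpret P: prob_space PX
    unfolding PX_def using assms(1,2) by (simp add: prob_space.prob_space_distr)
  have sp: "space PX = UNIV" unfolding PX_def by simp
  have AEpos: "AE x in PX. x > 0"
    unfolding PX_def using assms(2,3) by (subst AE_distr_iff) auto
  define d where "d = lam * b / (1 - b)"
  have d0: "d > 0" unfolding d_def using assms by auto
  define m where "m = (LINT x|PX. exp (- d * x))"
  have mint: "integrable PX (\<lambda>x. exp (- d * x))"
  proof (rule P.integrable_const_bound[where B=1])
    show "AE x in PX. norm (exp (- d * x)) \<le> 1"
      using AEpos by eventually_elim (use d0 in auto)
  qed (unfold PX_def, measurable)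
  have m0: "m > 0"
  proof -
    have ge: "m \<ge> 0" unfolding m_def by (intro integral_nonneg_AE) auto
    have "m \<noteq> 0"
    proof
      assume "m = 0"
      then have "AE x in PX. exp (- d * x) = 0"
        using integral_nonneg_eq_0_iff_AE[OF mint] unfolding m_def by auto
      then have "AE x in PX. False" by simp
      then show False by simp
    qed
    with ge show ?thesis by simp
  qed
  define L1 where "L1 = \<bar>ln (lam / (1 - a))\<bar> + \<bar>ln (lam / (1 - b))\<bar>"
  define A where "A = \<alpha> * L1 + \<bar>ln (Gamma \<alpha>)\<bar> + \<bar>ln m\<bar> + 1"
  have \<alpha>0: "\<alpha> > 0" using assms by simp
  have A0: "A > 0"
  proof -
    have "\<alpha> * L1 \<ge> 0" unfolding L1_def using \<alpha>0 by simp
    then show ?thesis unfolding A_def by simp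
  qed
  show ?thesis
  proof (intro exI[of _ A] conjI ballI allI impI A0)
    fix \<tau> u :: real
    assume \<tau>: "\<tau> \<in> {a<..<b}" and u: "u > 0"
    have t0: "0 < \<tau>" "\<tau> < 1" "a < \<tau>" "\<tau> < b" using \<tau> assms by auto
    define c where "c = lam / (1 - \<tau>)"
    define K where "K = c powr (\<alpha>-1) * (u*\<tau>) powr ((\<alpha>-1)/2) / Gamma \<alpha>"
    define F where "F x = x powr (- (\<alpha> - 1) / 2) * exp (- lam * \<tau> * x / (1 - \<tau>)) *
        besselI (\<alpha> - 1) (2 * lam * sqrt (u * x * \<tau>) / (1 - \<tau>))" for x
    define I where "I = integral\<^sup>L PX F"
    have c0: "c > 0" unfolding c_def using t0 assms by auto
    have G: "Gamma \<alpha> > 0" using \<alpha>0 by (intro Gamma_real_pos)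
    have K0: "K > 0" unfolding K_def using G c0 u t0 by simp
    have Fm: "F \<in> borel_measurable PX" unfolding F_def PX_def by measurable
    have pw: "\<And>x. x > 0 \<Longrightarrow> K * exp (- c*\<tau>*x) \<le> F x \<and> F x \<le> K * exp (c * u)"
      unfolding F_def K_def c_def using pointwise[OF assms(4,5) t0(1,2) u] by blast
    have cd: "c * \<tau> \<le> d"
    proof -
      have "\<tau> / (1 - \<tau>) \<le> b / (1 - b)" using t0 assms by (intro frac_le) auto
      then have "lam * (\<tau> / (1 - \<tau>)) \<le> lam * (b / (1 - b))" using assms by (intro mult_left_mono) auto
      then show ?thesis unfolding c_def d_def by simp
    qed
    have Fint: "integrable PX F"
    proof (rule P.integrable_const_bound[where B="K * exp (c*u)"])
      show "AE x in PX. norm (F x) \<le> K * exp (c*u)"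
        using AEpos
      proof eventually_elim
        case (elim x)
        have "0 \<le> K * exp (- c*\<tau>*x)" using K0 by simp
        then show ?case using pw[OF elim] by simp
      qed
    qed (fact Fm)
    have Iup: "I \<le> K * exp (c*u)"
    proof -
      have "I \<le> (LINT x|PX. K * exp (c*u))"
        unfolding I_def
        by (rule integral_mono_AE[OF Fint]) (use AEpos pw in \<open>auto elim!: eventually_mono\<close>)
      also have "\<dots> = K * exp (c*u)" using P.prob_space by simp
      finally show ?thesis .
    qed
    have Ilow: "K * m \<le> I"
    proof -
      have "K * m = (LINT x|PX. K * exp (- d * x))" unfolding m_def by simp
      also have "\<dots> \<le> I" unfolding I_def
      proof (rule integral_mono_AE)
        show "integrable PX (\<lambda>x. K * exp (- d * x))" using mint by simp
        show "AE x in PX. K * exp (- d * x) \<le> F x"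
          using AEpos
        proof eventually_elim
          case (elim x)
          have "- d * x \<le> - (c * \<tau>) * x" using cd elim by (intro mult_right_mono) auto
          then have "K * exp (- d * x) \<le> K * exp (- c*\<tau>*x)" using K0 by (intro mult_left_mono) auto
          then show ?case using pw[OF elim] by simp
        qed
      qed (fact Fint)
      finally show ?thesis .
    qed
    define Q where "Q = c * (u / \<tau>) powr ((\<alpha> - 1) / 2) * K"
    have Q0: "Q > 0" unfolding Q_def using c0 K0 u t0 by simp
    have gdef: "gamma_path_density PX \<alpha> lam \<tau> u = c * (u / \<tau>) powr ((\<alpha> - 1) / 2) * exp (- c * u) * I"
      unfolding gamma_path_density_def I_def F_def c_def by simp
    have P0: "c * (u / \<tau>) powr ((\<alpha> - 1) / 2) * exp (- c * u) > 0" using c0 u t0 by simp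
    have gup: "gamma_path_density PX \<alpha> lam \<tau> u \<le> Q"
    proof -
      have "gamma_path_density PX \<alpha> lam \<tau> u \<le> c * (u / \<tau>) powr ((\<alpha> - 1) / 2) * exp (- c * u) * (K * exp (c*u))"
        unfolding gdef using P0 Iup by (intro mult_left_mono) auto
      also have "\<dots> = Q" unfolding Q_def by (simp add: exp_minus field_simps)
      finally show ?thesis .
    qed
    have glow: "Q * exp (- c * u) * m \<le> gamma_path_density PX \<alpha> lam \<tau> u"
    proof -
      have "Q * exp (- c * u) * m = c * (u / \<tau>) powr ((\<alpha> - 1) / 2) * exp (- c * u) * (K * m)"
        unfolding Q_def by (simp add: mult_ac)
      also have "\<dots> \<le> gamma_path_density PX \<alpha> lam \<tau> u"
        unfolding gdef using P0 Ilow by (intro mult_left_mono) auto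
      finally show ?thesis .
    qed
    have lowpos: "Q * exp (- c * u) * m > 0" using Q0 m0 by simp
    have lnQ: "ln Q = \<alpha> * ln c + (\<alpha> - 1) * ln u - ln (Gamma \<alpha>)"
      unfolding Q_def K_def using c0 u t0 G
      by (simp add: ln_mult ln_div ln_powr field_simps)
    have lnlow: "ln (Q * exp (- c * u) * m) = ln Q - c * u + ln m"
      using Q0 m0 by (simp add: ln_mult)
    define g where "g = gamma_path_density PX \<alpha> lam \<tau> u"
    have gpos: "g > 0" unfolding g_def using lowpos glow by linarith
    have lg1: "ln g \<le> ln Q" unfolding g_def using gup gpos g_def by simp
    have lg2: "ln Q - c * u + ln m \<le> ln g" unfolding lnlow[symmetric] g_def
      using glow lowpos by simp
    have lc: "\<bar>ln c\<bar> \<le> L1"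
    proof -
      have "lam / (1 - a) \<le> c" unfolding c_def using t0 assms by (intro frac_le) auto
      then have "ln (lam / (1 - a)) \<le> ln c" using assms c0 by (subst ln_le_cancel_iff) auto
      moreover have "c \<le> lam / (1 - b)" unfolding c_def using t0 assms by (intro frac_le) auto
      then have "ln c \<le> ln (lam / (1 - b))" using c0 by (subst ln_le_cancel_iff) auto
      ultimately show ?thesis unfolding L1_def by linarith
    qed
    have alc: "\<alpha> * \<bar>ln c\<bar> \<le> \<alpha> * L1" using lc \<alpha>0 by (intro mult_left_mono) auto
    have al: "\<bar>\<alpha> * ln c\<bar> = \<alpha> * \<bar>ln c\<bar>" using \<alpha>0 by (simp add: abs_mult)
    have nu: "\<bar>(\<alpha> - 1) * ln u\<bar> = \<bar>\<alpha> - 1\<bar> * \<bar>ln u\<bar>" by (simp add: abs_mult)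
    have cu: "c * u \<le> 2 * lam * u / (1 - b)"
    proof -
      have "c \<le> lam / (1 - b)" unfolding c_def using t0 assms by (intro frac_le) auto
      then have "c * u \<le> lam / (1 - b) * u" using u by (intro mult_right_mono) auto
      also have "\<dots> \<le> 2 * lam * u / (1 - b)" using assms u by (simp add: divide_simps)
      finally show ?thesis .
    qed
    have cu0: "c * u \<ge> 0" using c0 u by simp
    show "\<bar>ln (gamma_path_density (distr M borel X) \<alpha> lam \<tau> u)\<bar>
             \<le> A + 2 * lam * u / (1 - b) + \<bar>\<alpha> - 1\<bar> * \<bar>ln u\<bar>"
      unfolding PX_def[symmetric] g_def[symmetric] A_def
      using lg1 lg2 lnQ alc al nu cu cu0 by linarith
  qed
qed

end
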